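(* Let $f:\mathbb{R}\to\mathbb{R}$ satisfy $f(0)=0$ and $|f(u)-f(v)|\leq C|u-v|(e^{\lambda u^2}+e^{\lambda v^2})$ for all $u,v\in\mathbb{R}$, for some constants $C,\lambda>0$. Let $T>0$ and $u\in C([0,T];\exp L^2_0(\mathbb{R}^N))$. Then for every $2\leq p<\infty$, $f(u)\in C([0,T];L^p(\mathbb{R}^N))$.
   Context: The Orlicz space $\exp L^2(\mathbb{R}^N)$ is the set of $u\in L^1_{loc}(\mathbb{R}^N)$ such that $\int_{\mathbb{R}^N}(e^{|u(x)|^2/\alpha^2}-1)\,dx<\infty$ for some $\alpha>0$, with the Luxemburg norm $\|u\|_{\exp L^2}=\inf\{\alpha>0:\int_{\mathbb{R}^N}(e^{|u(x)|^2/\alpha^2}-1)\,dx\leq 1\}$. $\exp L^2_0(\mathbb{R}^N)$ is the closure of $C_0^\infty(\mathbb{R}^N)$ in this norm, equivalently the set of $u\in L^1_{loc}$ with $\int(e^{|u|^2/\alpha^2}-1)\,dx<\infty$ for every $\alpha>0$, equipped with the same norm. *)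

theory Defs
  imports "HOL-Analysis.Analysis"
begin

text \<open>Functions on R^N are modelled as functions on a Euclidean space type 'a,
  with Lebesgue measure.\<close>

definition loc_integrable :: "('a::euclidean_space \<Rightarrow> real) \<Rightarrow> bool" where
  "loc_integrable u \<longleftrightarrow> u \<in> borel_measurable lebesgue \<and>
     (\<forall>K. compact K \<longrightarrow> set_integrable lebesgue K u)"

definition orlicz_exp2_int :: "real \<Rightarrow> ('a::euclidean_space \<Rightarrow> real) \<Rightarrow> ennreal" where
  "orlicz_exp2_int \<alpha> u = (\<integral>\<^sup>+ x. ennreal (exp (\<bar>u x\<bar>^2 / \<alpha>^2) - 1) \<partial>lebesgue)"

definition expL2 :: "('a::euclidean_space \<Rightarrow> real) set" where
  "expL2 = {u. loc_integrable u \<and> (\<exists>\<alpha>>0. orlicz_exp2_int \<alpha> u < \<infinity>)}"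

definition expL2_0 :: "('a::euclidean_space \<Rightarrow> real) set" where
  "expL2_0 = {u. loc_integrable u \<and> (\<forall>\<alpha>>0. orlicz_exp2_int \<alpha> u < \<infinity>)}"

definition expL2_norm :: "('a::euclidean_space \<Rightarrow> real) \<Rightarrow> real" where
  "expL2_norm u = Inf {\<alpha>. \<alpha> > 0 \<and> orlicz_exp2_int \<alpha> u \<le> 1}"

definition Lp_space :: "real \<Rightarrow> ('a::euclidean_space \<Rightarrow> real) set" where
  "Lp_space p = {g. g \<in> borel_measurable lebesgue \<and>
      (\<integral>\<^sup>+ x. ennreal (\<bar>g x\<bar> powr p) \<partial>lebesgue) < \<infinity>}"

definition Lp_norm :: "real \<Rightarrow> ('a::euclidean_space \<Rightarrow> real) \<Rightarrow> real" where
  "Lp_norm p g = enn2real (\<integral>\<^sup>+ x. ennreal (\<bar>g x\<bar> powr p) \<partial>lebesgue) powr (1 / p)"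

definition cont_expL2_0 :: "real \<Rightarrow> (real \<Rightarrow> 'a::euclidean_space \<Rightarrow> real) \<Rightarrow> bool" where
  "cont_expL2_0 T u \<longleftrightarrow> (\<forall>t\<in>{0..T}. u t \<in> expL2_0) \<and>
     (\<forall>t\<in>{0..T}. ((\<lambda>s. expL2_norm (\<lambda>x. u s x - u t x)) \<longlongrightarrow> 0) (at t within {0..T}))"

definition cont_Lp :: "real \<Rightarrow> real \<Rightarrow> (real \<Rightarrow> 'a::euclidean_space \<Rightarrow> real) \<Rightarrow> bool" where
  "cont_Lp p T v \<longleftrightarrow> (\<forall>t\<in>{0..T}. v t \<in> Lp_space p) \<and>
     (\<forall>t\<in>{0..T}. ((\<lambda>s. Lp_norm p (\<lambda>x. v s x - v t x)) \<longlongrightarrow> 0) (at t within {0..T}))"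

end

theory Submission
  imports Defs
begin
lemma exp_lb: fixes x::real assumes "x \<ge> 0" "k \<ge> 1" shows "x^k / fact k \<le> exp x - 1"
proof -
  have s: "(\<lambda>n. x^n / fact n) sums exp x" using exp_converges[of x] by (simp add: divide_inverse mult.commute)
  have "(\<Sum>n\<in>{0,k}. x^n / fact n) \<le> exp x"
    using sum_le_suminf[OF sums_summable[OF s], of "{0,k}"] sums_unique[OF s] assms by auto
  then show ?thesis using assms by simp
qed

lemma exp_lb': fixes x::real assumes "x \<ge> 0" "k \<ge> 1" shows "x^k \<le> fact k * (exp x - 1)"
proof -
  have "x^k / fact k \<le> exp x - 1" by (rule exp_lb[OF assms])
  then show ?thesis by (subst (asm) pos_divide_le_eq) (auto simp: mult.commute)
qed

lemma pow_le_exp0: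
  fixes q :: real assumes "q \<ge> 2"
  shows "\<exists>K>0. \<forall>z::real. \<bar>z\<bar> powr q \<le> K * (exp (z^2) - 1)"
proof -
  define k where "k = nat \<lfloor>q/2\<rfloor>"
  have k1: "k \<ge> 1" using assms unfolding k_def by linarith
  have fl: "real_of_int \<lfloor>q/2\<rfloor> \<le> q/2" "q/2 < real_of_int \<lfloor>q/2\<rfloor> + 1" "\<lfloor>q/2\<rfloor> \<ge> 0"
    using assms by linarith+
  have rk: "real k = real_of_int \<lfloor>q/2\<rfloor>" unfolding k_def using fl(3) by simp
  have kq: "2 * real k \<le> q" "q \<le> 2 * real (k+1)" using fl rk by (simp_all, linarith+)
  define K where "K = (fact k + fact (k+1) :: real)"
  have Kpos: "K > 0" unfolding K_def by (simp add: add_pos_pos)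
  have "\<bar>z\<bar> powr q \<le> K * (exp (z^2) - 1)" for z :: real
  proof (cases "z = 0")
    case True then show ?thesis by simp
  next
    case False
    have e0: "exp (z^2) - 1 \<ge> 0" by simp
    have A: "(z^2)^k \<le> fact k * (exp (z^2) - 1)" using exp_lb'[of "z^2" k] k1 by simp
    have B: "(z^2)^(k+1) \<le> fact (k+1) * (exp (z^2) - 1)" using exp_lb'[of "z^2" "k+1"] by simp
    have pm: "\<bar>z\<bar> powr (2 * real m) = (z^2)^m" for m
    proof -
      have "\<bar>z\<bar> powr (2 * real m) = \<bar>z\<bar> powr (real (2*m))" by simp
      also have "\<dots> = \<bar>z\<bar>^(2*m)" using False powr_realpow[of "\<bar>z\<bar>" "2*m"] by (simp del: of_nat_mult)
      also have "\<dots> = (z^2)^m" by (simp add: power_mult)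
      finally show ?thesis .
    qed
    have pk: "\<bar>z\<bar> powr (2 * real k) = (z^2)^k" by (rule pm)
    have pk1: "\<bar>z\<bar> powr (2 * real (k+1)) = (z^2)^(k+1)" by (rule pm)
    show ?thesis
    proof (cases "\<bar>z\<bar> \<le> 1")
      case True
      have "\<bar>z\<bar> powr q \<le> \<bar>z\<bar> powr (2 * real k)" using powr_mono'[OF kq(1)] True by simp
      also have "\<dots> \<le> fact k * (exp (z^2) - 1)" using pk A by simp
      also have "\<dots> \<le> K * (exp (z^2) - 1)" unfolding K_def using e0
        by (intro mult_right_mono) auto
      finally show ?thesis .
    next
      case False
      have "\<bar>z\<bar> powr q \<le> \<bar>z\<bar> powr (2 * real (k+1))" using powr_mono[OF kq(2), of "\<bar>z\<bar>"] False by linarith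
      also have "\<dots> \<le> fact (k+1) * (exp (z^2) - 1)" using pk1 B by simp
      also have "\<dots> \<le> K * (exp (z^2) - 1)" unfolding K_def using e0
        by (intro mult_right_mono) auto
      finally show ?thesis .
    qed
  qed
  then show ?thesis using Kpos by blast
qed
lemma pow_le_exp_half:
  fixes q :: real assumes "q \<ge> 2"
  shows "\<exists>K>0. \<forall>z::real. \<bar>z\<bar> powr q \<le> K * (exp (z^2/2) - 1)"
proof -
  obtain K0 where K0: "K0 > 0" "\<And>z::real. \<bar>z\<bar> powr q \<le> K0 * (exp (z^2) - 1)"
    using pow_le_exp0[OF assms] by blast
  have "\<bar>z\<bar> powr q \<le> (sqrt 2 powr q * K0) * (exp (z^2/2) - 1)" for z :: real
  proof -
    have e: "\<bar>z\<bar> = sqrt 2 * \<bar>z / sqrt 2\<bar>" by (simp add: abs_div)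
    have "\<bar>z\<bar> powr q = sqrt 2 powr q * \<bar>z / sqrt 2\<bar> powr q"
      by (subst e, rule powr_mult)
    also have "\<dots> \<le> sqrt 2 powr q * (K0 * (exp ((z / sqrt 2)^2) - 1))"
      by (intro mult_left_mono K0(2)) auto
    also have "(z / sqrt 2)^2 = z^2/2" by (simp add: power_divide)
    finally show ?thesis by simp
  qed
  moreover have "sqrt 2 powr q * K0 > 0" using K0 by simp
  ultimately show ?thesis by blast
qed

lemma core_pw:
  fixes q :: real assumes "q \<ge> 2"
  shows "\<exists>K>0. \<forall>\<epsilon> \<kappa> y::real. \<epsilon> > 0 \<longrightarrow> 0 \<le> \<kappa> \<longrightarrow> \<kappa> * \<epsilon>^2 \<le> 1/2 \<longrightarrow>
     \<bar>y\<bar> powr q * exp (\<kappa> * y^2) \<le> \<epsilon> powr q * K * (exp (y^2/\<epsilon>^2) - 1)"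
proof -
  obtain K where K: "K > 0" "\<And>z::real. \<bar>z\<bar> powr q \<le> K * (exp (z^2/2) - 1)"
    using pow_le_exp_half[OF assms] by blast
  have "\<bar>y\<bar> powr q * exp (\<kappa> * y^2) \<le> \<epsilon> powr q * K * (exp (y^2/\<epsilon>^2) - 1)"
    if h: "\<epsilon> > 0" "0 \<le> \<kappa>" "\<kappa> * \<epsilon>^2 \<le> 1/2" for \<epsilon> \<kappa> y :: real
  proof -
    define z where "z = y / \<epsilon>"
    have yz: "y = \<epsilon> * z" using h unfolding z_def by simp
    have z2: "y^2/\<epsilon>^2 = z^2" unfolding z_def by (simp add: power_divide)
    have p1: "\<bar>y\<bar> powr q = \<epsilon> powr q * \<bar>z\<bar> powr q"
      unfolding yz using h by (simp add: abs_mult powr_mult)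
    have "\<kappa> * y^2 = (\<kappa> * \<epsilon>^2) * z^2" unfolding yz by (simp add: power_mult_distrib)
    also have "\<dots> \<le> (1/2) * z^2" using h by (intro mult_right_mono) auto
    finally have p2: "exp (\<kappa> * y^2) \<le> exp (z^2/2)" by simp
    have "\<bar>y\<bar> powr q * exp (\<kappa> * y^2) \<le> \<epsilon> powr q * \<bar>z\<bar> powr q * exp (z^2/2)"
      unfolding p1 using p2 by (intro mult_left_mono) auto
    also have "\<dots> \<le> \<epsilon> powr q * (K * (exp (z^2/2) - 1)) * exp (z^2/2)"
      using K(2)[of z] by (intro mult_right_mono mult_left_mono) auto
    also have "\<dots> = \<epsilon> powr q * K * ((exp (z^2/2) - 1) * exp (z^2/2))" by simp
    also have "(exp (z^2/2) - 1) * exp (z^2/2) = exp (z^2) - exp (z^2/2)"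
      by (simp add: algebra_simps flip: exp_add)
    also have "\<dots> \<le> exp (z^2) - 1" by simp
    finally show ?thesis unfolding z2 using K(1) h
      by (smt (verit) mult_left_mono powr_ge_zero mult_nonneg_nonneg)
  qed
  then show ?thesis using K(1) by blast
qed
lemma B_pw:
  fixes f :: "real \<Rightarrow> real" and C lam p s a b :: real
  assumes C: "C > 0" and lam: "lam > 0"
    and L: "\<And>v w. \<bar>f v - f w\<bar> \<le> C * \<bar>v - w\<bar> * (exp (lam * v^2) + exp (lam * w^2))"
    and p: "p \<ge> 2" and s: "s > 0"
  shows "\<bar>f a - f b\<bar> powr p \<le> (2*C) powr p * ((abs (a-b)) powr p * exp ((2*p*lam) * (a-b)^2)
     + (1/(2 * s)) * ((abs (a-b)) powr (2*p) * exp ((4*p*lam) * (a-b)^2))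
     + (s/2) * (exp ((4*p*lam) * b^2) - 1))"
proof -
  define d where "d = a - b"
  have ad: "a = b + d" unfolding d_def by simp
  have sq: "a^2 \<le> 2*b^2 + 2*d^2" unfolding ad
    using sum_squares_ge_zero[of b d] by (smt (verit) power2_sum zero_le_power2 power2_diff)
  have e1: "exp (lam * a^2) \<le> exp (2*lam*b^2) * exp (2*lam*d^2)"
    unfolding exp_add[symmetric] using mult_left_mono[OF sq, of lam] lam by (simp add: algebra_simps)
  have e2: "exp (lam * b^2) \<le> exp (2*lam*b^2) * exp (2*lam*d^2)"
    unfolding exp_add[symmetric] using lam
      by (simp add: algebra_simps)
  have h1: "\<bar>f a - f b\<bar> \<le> (2*C) * (abs d) * exp (2*lam*b^2) * exp (2*lam*d^2)"
  proof -
    have "\<bar>f a - f b\<bar> \<le> C * (abs d) * (exp (lam * a^2) + exp (lam * b^2))" using L d_def by simp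
    also have "\<dots> \<le> C * (abs d) * (2 * (exp (2*lam*b^2) * exp (2*lam*d^2)))"
      using e1 e2 C by (intro mult_left_mono) auto
    finally show ?thesis by simp
  qed
  define X where "X = (abs d) powr p * exp ((2*p*lam) * d^2)"
  define Y where "Y = exp ((2*p*lam) * b^2) - 1"
  have X0: "X \<ge> 0" and Y0: "Y \<ge> 0" unfolding X_def Y_def using p lam by auto
  have h2: "\<bar>f a - f b\<bar> powr p \<le> (2*C) powr p * (X * (1 + Y))"
  proof -
    have "\<bar>f a - f b\<bar> powr p \<le> ((2*C) * (abs d) * exp (2*lam*b^2) * exp (2*lam*d^2)) powr p"
      using h1 p by (intro powr_mono2) auto
    also have "\<dots> = (2*C) powr p * (abs d) powr p * exp (2*lam*b^2) powr p * exp (2*lam*d^2) powr p"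
      using C by (simp add: powr_mult)
    also have "\<dots> = (2*C) powr p * (X * (1 + Y))"
      unfolding X_def Y_def exp_powr_real by (simp add: algebra_simps)
    finally show ?thesis .
  qed
  have XY: "X * Y \<le> (1/(2 * s)) * X^2 + (s/2) * Y^2"
  proof -
    have "0 \<le> (X - s*Y)^2 / (2 * s)" using s by simp
    also have "(X - s*Y)^2 / (2 * s) = (1/(2 * s)) * X^2 + (s/2) * Y^2 - X * Y"
      using s by (simp add: field_simps power2_eq_square)
    finally show ?thesis by simp
  qed
  have X2: "X^2 = (abs d) powr (2*p) * exp ((4*p*lam) * d^2)"
    unfolding X_def power2_eq_square
    by (simp add: powr_add[symmetric] exp_add[symmetric] algebra_simps)
  have Y2: "Y^2 \<le> exp ((4*p*lam) * b^2) - 1"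
  proof -
    have "Y^2 = exp ((4*p*lam) * b^2) - 2 * exp ((2*p*lam) * b^2) + 1"
      unfolding Y_def power2_eq_square by (simp add: algebra_simps exp_add[symmetric])
    then show ?thesis using Y_def Y0 by simp
  qed
  have "X * (1 + Y) \<le> X + (1/(2 * s)) * ((abs d) powr (2*p) * exp ((4*p*lam) * d^2))
      + (s/2) * (exp ((4*p*lam) * b^2) - 1)"
  proof -
    have "(s/2) * Y^2 \<le> (s/2) * (exp ((4*p*lam) * b^2) - 1)"
      using Y2 s by (intro mult_left_mono) auto
    then have "X * Y \<le> (1/(2 * s)) * ((abs d) powr (2*p) * exp ((4*p*lam) * d^2))
      + (s/2) * (exp ((4*p*lam) * b^2) - 1)" unfolding X2[symmetric] using XY by linarith
    then show ?thesis by (simp add: distrib_left)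
  qed
  then have "\<bar>f a - f b\<bar> powr p \<le> (2*C) powr p * (X + (1/(2 * s)) * ((abs d) powr (2*p) * exp ((4*p*lam) * d^2))
      + (s/2) * (exp ((4*p*lam) * b^2) - 1))"
    by (rule order_trans[OF h2 mult_left_mono]) simp_all
  then show ?thesis unfolding X_def d_def .
qed
lemma core_int:
  fixes d :: "'a::euclidean_space \<Rightarrow> real"
  assumes K: "\<forall>\<epsilon> \<kappa> y::real. \<epsilon> > 0 \<longrightarrow> 0 \<le> \<kappa> \<longrightarrow> \<kappa> * \<epsilon>^2 \<le> 1/2 \<longrightarrow>
     \<bar>y\<bar> powr q * exp (\<kappa> * y^2) \<le> \<epsilon> powr q * K * (exp (y^2/\<epsilon>^2) - 1)"
    and Kp: "K > 0" and dm: "d \<in> borel_measurable lebesgue"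
    and e: "\<epsilon> > 0" "0 \<le> \<kappa>" "\<kappa> * \<epsilon>^2 \<le> 1/2"
  shows "(\<integral>\<^sup>+x. ennreal (\<bar>d x\<bar> powr q * exp (\<kappa> * (d x)^2)) \<partial>lebesgue)
     \<le> ennreal (\<epsilon> powr q * K) * orlicz_exp2_int \<epsilon> d"
proof -
  have "(\<integral>\<^sup>+x. ennreal (\<bar>d x\<bar> powr q * exp (\<kappa> * (d x)^2)) \<partial>lebesgue)
      \<le> (\<integral>\<^sup>+x. ennreal (\<epsilon> powr q * K) * ennreal (exp (\<bar>d x\<bar>^2 / \<epsilon>^2) - 1) \<partial>lebesgue)"
  proof (intro nn_integral_mono)
    fix x
    have "\<bar>d x\<bar> powr q * exp (\<kappa> * (d x)^2) \<le> (\<epsilon> powr q * K) * (exp (\<bar>d x\<bar>^2 / \<epsilon>^2) - 1)"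
      using K e by simp
    then show "ennreal (\<bar>d x\<bar> powr q * exp (\<kappa> * (d x)^2))
      \<le> ennreal (\<epsilon> powr q * K) * ennreal (exp (\<bar>d x\<bar>^2 / \<epsilon>^2) - 1)"
      by (subst ennreal_mult''[symmetric]) (auto intro: ennreal_leI)
  qed
  also have "\<dots> = ennreal (\<epsilon> powr q * K) * orlicz_exp2_int \<epsilon> d"
  proof -
    have "(\<lambda>x. ennreal (exp (\<bar>d x\<bar>^2 / \<epsilon>^2) - 1)) \<in> borel_measurable lebesgue"
      using dm by measurable
    then show ?thesis unfolding orlicz_exp2_int_def by (rule nn_integral_cmult)
  qed
  finally show ?thesis .
qed

lemma ennreal_combo:
  assumes "0 \<le> c" "0 \<le> x" "0 \<le> e" "0 \<le> y" "0 \<le> g" "0 \<le> z"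
  shows "ennreal c * (ennreal x + ennreal e * ennreal y + ennreal g * ennreal z) = ennreal (c * (x + e * y + g * z))"
  using assms by (simp add: ennreal_mult ennreal_plus)

lemma B_int:
  fixes f :: "real \<Rightarrow> real" and C lam p \<epsilon> R0 M K1 K2 :: real
    and a b :: "'a::euclidean_space \<Rightarrow> real"
  assumes C: "C > 0" and lam: "lam > 0"
    and L: "\<And>v w. \<bar>f v - f w\<bar> \<le> C * \<bar>v - w\<bar> * (exp (lam * v^2) + exp (lam * w^2))"
    and p: "p \<ge> 2"
    and K1: "\<forall>\<epsilon> \<kappa> y::real. \<epsilon> > 0 \<longrightarrow> 0 \<le> \<kappa> \<longrightarrow> \<kappa> * \<epsilon>^2 \<le> 1/2 \<longrightarrow>
     \<bar>y\<bar> powr p * exp (\<kappa> * y^2) \<le> \<epsilon> powr p * K1 * (exp (y^2/\<epsilon>^2) - 1)" "K1 > 0"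
    and K2: "\<forall>\<epsilon> \<kappa> y::real. \<epsilon> > 0 \<longrightarrow> 0 \<le> \<kappa> \<longrightarrow> \<kappa> * \<epsilon>^2 \<le> 1/2 \<longrightarrow>
     \<bar>y\<bar> powr (2*p) * exp (\<kappa> * y^2) \<le> \<epsilon> powr (2*p) * K2 * (exp (y^2/\<epsilon>^2) - 1)" "K2 > 0"
    and am: "a \<in> borel_measurable lebesgue" and bm: "b \<in> borel_measurable lebesgue"
    and e: "\<epsilon> > 0" "(4*p*lam) * \<epsilon>^2 \<le> 1/2"
    and R0: "orlicz_exp2_int \<epsilon> (\<lambda>x. a x - b x) \<le> ennreal R0" "R0 \<ge> 0"
    and M: "(\<integral>\<^sup>+x. ennreal (exp ((4*p*lam) * (b x)^2) - 1) \<partial>lebesgue) \<le> ennreal M" "M \<ge> 0"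
  shows "(\<integral>\<^sup>+x. ennreal (\<bar>f (a x) - f (b x)\<bar> powr p) \<partial>lebesgue)
     \<le> ennreal ((2*C) powr p * \<epsilon> powr p * (K1 * R0 + K2 * R0 / 2 + M / 2))"
proof -
  define s where "s = \<epsilon> powr p"
  have s0: "s > 0" unfolding s_def using e by simp
  define d where "d = (\<lambda>x. a x - b x)"
  have dm: "d \<in> borel_measurable lebesgue" unfolding d_def using am bm by measurable
  have k2: "(2*p*lam) * \<epsilon>^2 \<le> 1/2" using e p lam
    by (smt (verit) mult_right_mono zero_le_power2)
  have I1: "(\<integral>\<^sup>+x. ennreal (\<bar>d x\<bar> powr p * exp ((2*p*lam) * (d x)^2)) \<partial>lebesgue)
     \<le> ennreal (s * K1) * ennreal R0"
  proof -
    have "0 \<le> 2*p*lam" using p lam by simp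
    from core_int[OF K1 dm e(1) this k2]
    have "(\<integral>\<^sup>+x. ennreal (\<bar>d x\<bar> powr p * exp ((2*p*lam) * (d x)^2)) \<partial>lebesgue)
     \<le> ennreal (s * K1) * orlicz_exp2_int \<epsilon> d" unfolding s_def .
    also have "\<dots> \<le> ennreal (s * K1) * ennreal R0" using R0(1) unfolding d_def
      by (intro mult_left_mono) auto
    finally show ?thesis .
  qed
  have I2: "(\<integral>\<^sup>+x. ennreal (\<bar>d x\<bar> powr (2*p) * exp ((4*p*lam) * (d x)^2)) \<partial>lebesgue)
     \<le> ennreal (s * s * K2) * ennreal R0"
  proof -
    have "0 \<le> 4*p*lam" using p lam by simp
    from core_int[OF K2 dm e(1) this e(2)]
    have "(\<integral>\<^sup>+x. ennreal (\<bar>d x\<bar> powr (2*p) * exp ((4*p*lam) * (d x)^2)) \<partial>lebesgue)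
     \<le> ennreal (\<epsilon> powr (2*p) * K2) * orlicz_exp2_int \<epsilon> d" .
    also have "\<epsilon> powr (2*p) = s * s" unfolding s_def by (simp add: powr_add[symmetric])
    also have "ennreal (s * s * K2) * orlicz_exp2_int \<epsilon> d \<le> ennreal (s * s * K2) * ennreal R0"
      using R0(1) unfolding d_def by (intro mult_left_mono) auto
    finally show ?thesis .
  qed
  define c where "c = (2*C) powr p"
  define X where "X = (\<lambda>x. ennreal (\<bar>d x\<bar> powr p * exp ((2*p*lam) * (d x)^2)))"
  define X2 where "X2 = (\<lambda>x. ennreal (\<bar>d x\<bar> powr (2*p) * exp ((4*p*lam) * (d x)^2)))"
  define Y where "Y = (\<lambda>x. ennreal (exp ((4*p*lam) * (b x)^2) - 1))"
  have Xm: "X \<in> borel_measurable lebesgue" unfolding X_def using dm by measurable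
  have X2m: "X2 \<in> borel_measurable lebesgue" unfolding X2_def using dm by measurable
  have Ym: "Y \<in> borel_measurable lebesgue" unfolding Y_def using bm by measurable
  have step1: "(\<integral>\<^sup>+x. ennreal (\<bar>f (a x) - f (b x)\<bar> powr p) \<partial>lebesgue)
     \<le> (\<integral>\<^sup>+x. ennreal c * (X x + ennreal (1/(2 * s)) * X2 x + ennreal (s/2) * Y x) \<partial>lebesgue)"
  proof (intro nn_integral_mono)
    fix x
    have "\<bar>f (a x) - f (b x)\<bar> powr p \<le> c * (\<bar>d x\<bar> powr p * exp ((2*p*lam) * (d x)^2)
     + (1/(2 * s)) * (\<bar>d x\<bar> powr (2*p) * exp ((4*p*lam) * (d x)^2))
     + (s/2) * (exp ((4*p*lam) * (b x)^2) - 1))"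
      unfolding c_def d_def using B_pw[OF C lam L p s0, of "a x" "b x"] by simp
    moreover have "ennreal c * (X x + ennreal (1/(2 * s)) * X2 x + ennreal (s/2) * Y x) =
      ennreal (c * (\<bar>d x\<bar> powr p * exp ((2*p*lam) * (d x)^2)
     + (1/(2 * s)) * (\<bar>d x\<bar> powr (2*p) * exp ((4*p*lam) * (d x)^2))
     + (s/2) * (exp ((4*p*lam) * (b x)^2) - 1)))"
      unfolding X_def X2_def Y_def c_def using s0 p lam
      by (intro ennreal_combo) auto
    ultimately show "ennreal (\<bar>f (a x) - f (b x)\<bar> powr p) \<le> ennreal c * (X x + ennreal (1/(2 * s)) * X2 x + ennreal (s/2) * Y x)"
      by (simp only:) (rule ennreal_leI)
  qed
  have m1: "(\<lambda>x. ennreal (1/(2 * s)) * X2 x) \<in> borel_measurable lebesgue"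
    unfolding X2_def using dm by measurable
  have m2: "(\<lambda>x. ennreal (s/2) * Y x) \<in> borel_measurable lebesgue"
    unfolding Y_def using bm by measurable
  have m3: "(\<lambda>x. X x + ennreal (1/(2 * s)) * X2 x) \<in> borel_measurable lebesgue"
    unfolding X_def X2_def using dm by measurable
  have m4: "(\<lambda>x. X x + ennreal (1/(2 * s)) * X2 x + ennreal (s/2) * Y x) \<in> borel_measurable lebesgue"
    unfolding X_def X2_def Y_def using dm bm by measurable
  have step2: "(\<integral>\<^sup>+x. ennreal c * (X x + ennreal (1/(2 * s)) * X2 x + ennreal (s/2) * Y x) \<partial>lebesgue)
     = ennreal c * (integral\<^sup>N lebesgue X + ennreal (1/(2 * s)) * integral\<^sup>N lebesgue X2
         + ennreal (s/2) * integral\<^sup>N lebesgue Y)"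
    using m1 m2 m3 m4 Xm X2m Ym
    by (simp add: nn_integral_cmult nn_integral_add)
  have step3: "ennreal c * (integral\<^sup>N lebesgue X + ennreal (1/(2 * s)) * integral\<^sup>N lebesgue X2
         + ennreal (s/2) * integral\<^sup>N lebesgue Y)
     \<le> ennreal c * (ennreal (s * K1) * ennreal R0 + ennreal (1/(2 * s)) * (ennreal (s * s * K2) * ennreal R0)
         + ennreal (s/2) * ennreal M)"
    using I1 I2 M(1) unfolding X_def X2_def Y_def
    by (intro mult_left_mono add_mono) auto
  have step4: "ennreal c * (ennreal (s * K1) * ennreal R0 + ennreal (1/(2 * s)) * (ennreal (s * s * K2) * ennreal R0)
         + ennreal (s/2) * ennreal M) = ennreal ((2*C) powr p * \<epsilon> powr p * (K1 * R0 + K2 * R0 / 2 + M / 2))"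
  proof -
    have "ennreal c * (ennreal (s * K1) * ennreal R0 + ennreal (1/(2 * s)) * (ennreal (s * s * K2) * ennreal R0)
         + ennreal (s/2) * ennreal M) = ennreal c * (ennreal (s * K1 * R0) + ennreal (1/(2 * s)) * ennreal (s * s * K2 * R0)
         + ennreal (s/2) * ennreal M)"
      using s0 K1(2) K2(2) R0(2) by (simp add: ennreal_mult)
    also have "\<dots> = ennreal (c * (s * K1 * R0 + (1/(2 * s)) * (s * s * K2 * R0) + (s/2) * M))"
      using s0 K1(2) K2(2) R0(2) M(2) unfolding c_def by (intro ennreal_combo) auto
    also have "c * (s * K1 * R0 + (1/(2 * s)) * (s * s * K2 * R0) + (s/2) * M)
       = (2*C) powr p * \<epsilon> powr p * (K1 * R0 + K2 * R0 / 2 + M / 2)"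
      unfolding c_def s_def using s0 unfolding s_def by (simp add: field_simps)
    finally show ?thesis .
  qed
  show ?thesis using step1 step2 step3 step4 by simp
qed

lemma orlicz_mono:
  assumes "0 < \<alpha>" "\<alpha> \<le> \<beta>"
  shows "orlicz_exp2_int \<beta> u \<le> orlicz_exp2_int \<alpha> u"
  unfolding orlicz_exp2_int_def
proof (intro nn_integral_mono ennreal_leI)
  fix x
  have "\<alpha>^2 \<le> \<beta>^2" using assms by (intro power_mono) auto
  then have "\<bar>u x\<bar>^2 / \<beta>^2 \<le> \<bar>u x\<bar>^2 / \<alpha>^2" using assms
    by (intro divide_left_mono) auto
  then show "exp (\<bar>u x\<bar>^2 / \<beta>^2) - 1 \<le> exp (\<bar>u x\<bar>^2 / \<alpha>^2) - 1" by simp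
qed

lemma orlicz_diff:
  fixes a b :: "'a::euclidean_space \<Rightarrow> real"
  assumes am: "a \<in> borel_measurable lebesgue" and bm: "b \<in> borel_measurable lebesgue"
  shows "orlicz_exp2_int 1 (\<lambda>x. a x - b x) \<le> orlicz_exp2_int (1/2) a + orlicz_exp2_int (1/2) b"
proof -
  have "orlicz_exp2_int 1 (\<lambda>x. a x - b x) \<le>
     (\<integral>\<^sup>+x. ennreal (exp (\<bar>a x\<bar>^2 / (1/2)^2) - 1) + ennreal (exp (\<bar>b x\<bar>^2 / (1/2)^2) - 1) \<partial>lebesgue)"
    unfolding orlicz_exp2_int_def
  proof (intro nn_integral_mono)
    fix x
    have sq: "(a x - b x)^2 \<le> max (4 * (a x)^2) (4 * (b x)^2)"
      by (smt (verit) power2_diff zero_le_power2 sum_squares_ge_zero power2_sum)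
    have ge: "1 \<le> exp (4 * (a x)^2)" "1 \<le> exp (4 * (b x)^2)" by auto
    have "exp ((a x - b x)^2) - 1 \<le> (exp (4 * (a x)^2) - 1) + (exp (4 * (b x)^2) - 1)"
    proof (cases "(a x)^2 \<le> (b x)^2")
      case True then have "(a x - b x)^2 \<le> 4 * (b x)^2" using sq by simp
      then have "exp ((a x - b x)^2) \<le> exp (4 * (b x)^2)" by simp
      then show ?thesis using ge by linarith
    next
      case False then have "(a x - b x)^2 \<le> 4 * (a x)^2" using sq by simp
      then have "exp ((a x - b x)^2) \<le> exp (4 * (a x)^2)" by simp
      then show ?thesis using ge by linarith
    qed
    then have "exp (\<bar>a x - b x\<bar>^2 / 1^2) - 1 \<le>
        (exp (\<bar>a x\<bar>^2 / (1/2)^2) - 1) + (exp (\<bar>b x\<bar>^2 / (1/2)^2) - 1)"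
      by (simp add: power_divide mult.commute)
    then show "ennreal (exp (\<bar>a x - b x\<bar>^2 / 1^2) - 1) \<le>
        ennreal (exp (\<bar>a x\<bar>^2 / (1/2)^2) - 1) + ennreal (exp (\<bar>b x\<bar>^2 / (1/2)^2) - 1)"
      by (subst ennreal_plus[symmetric]) (auto intro: ennreal_leI)
  qed
  also have "\<dots> = orlicz_exp2_int (1/2) a + orlicz_exp2_int (1/2) b"
  proof -
    have ma: "(\<lambda>x. ennreal (exp (\<bar>a x\<bar>^2 / (1/2)^2) - 1)) \<in> borel_measurable lebesgue"
      using am by measurable
    have mb: "(\<lambda>x. ennreal (exp (\<bar>b x\<bar>^2 / (1/2)^2) - 1)) \<in> borel_measurable lebesgue"
      using bm by measurable
    show ?thesis unfolding orlicz_exp2_int_def by (rule nn_integral_add[OF ma mb])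
  qed
  finally show ?thesis .
qed

lemma orlicz_large:
  fixes v :: "'a::euclidean_space \<Rightarrow> real"
  assumes vm: "v \<in> borel_measurable lebesgue" and a: "\<alpha> \<ge> 1"
  shows "orlicz_exp2_int \<alpha> v \<le> ennreal (1/\<alpha>^2) * orlicz_exp2_int 1 v"
proof -
  have "orlicz_exp2_int \<alpha> v \<le> (\<integral>\<^sup>+x. ennreal (1/\<alpha>^2) * ennreal (exp (\<bar>v x\<bar>^2 / 1^2) - 1) \<partial>lebesgue)"
    unfolding orlicz_exp2_int_def
  proof (intro nn_integral_mono)
    fix x
    define t where "t = 1/\<alpha>^2"
    have t: "0 \<le> t" "t \<le> 1" unfolding t_def using a by (auto simp: field_simps)
    have "exp ((1 - t) *\<^sub>R 0 + t *\<^sub>R \<bar>v x\<bar>^2) \<le> (1 - t) * exp 0 + t * exp (\<bar>v x\<bar>^2)"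
      by (rule convex_onD[OF exp_convex t]) auto
    then have "exp (\<bar>v x\<bar>^2 / \<alpha>^2) - 1 \<le> t * (exp (\<bar>v x\<bar>^2) - 1)"
      unfolding t_def by (simp add: algebra_simps)
    then show "ennreal (exp (\<bar>v x\<bar>^2 / \<alpha>^2) - 1) \<le> ennreal (1/\<alpha>^2) * ennreal (exp (\<bar>v x\<bar>^2 / 1^2) - 1)"
      unfolding t_def by (simp add: ennreal_mult[symmetric] ennreal_leI)
  qed
  also have "\<dots> = ennreal (1/\<alpha>^2) * orlicz_exp2_int 1 v"
    unfolding orlicz_exp2_int_def using vm by (intro nn_integral_cmult) (measurable, auto)
  finally show ?thesis .
qed

lemma orlicz_norm_small:
  fixes v :: "'a::euclidean_space \<Rightarrow> real"
  assumes vm: "v \<in> borel_measurable lebesgue" and fin: "orlicz_exp2_int 1 v < \<infinity>"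
    and n: "expL2_norm v < \<epsilon>"
  shows "orlicz_exp2_int \<epsilon> v \<le> 1"
proof -
  define S where "S = {\<alpha>. \<alpha> > 0 \<and> orlicz_exp2_int \<alpha> v \<le> 1}"
  define R where "R = enn2real (orlicz_exp2_int 1 v)"
  have R0: "R \<ge> 0" by (simp add: R_def)
  have R: "orlicz_exp2_int 1 v = ennreal R" "R \<ge> 0" unfolding R_def using fin R0
    by (auto simp: ennreal_enn2real_if R_def)
  define \<alpha> where "\<alpha> = sqrt R + 1"
  have a1: "\<alpha> \<ge> 1" unfolding \<alpha>_def using R0 by simp
  have a2: "R \<le> \<alpha>^2" unfolding \<alpha>_def using R(2)
    by (simp add: power2_sum)
  have "orlicz_exp2_int \<alpha> v \<le> ennreal (1/\<alpha>^2) * ennreal R"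
    using orlicz_large[OF vm a1] R by simp
  also have "\<dots> = ennreal (R / \<alpha>^2)" using R a1 by (simp add: ennreal_mult[symmetric])
  also have "\<dots> \<le> 1" using a2 a1 by (simp add: divide_le_eq_1)
  finally have "\<alpha> \<in> S" unfolding S_def using a1 by simp
  then have "S \<noteq> {}" by blast
  from cInf_lessD[OF this] n obtain \<beta> where b: "\<beta> \<in> S" "\<beta> < \<epsilon>"
    unfolding expL2_norm_def S_def by blast
  have "orlicz_exp2_int \<epsilon> v \<le> orlicz_exp2_int \<beta> v"
    using b unfolding S_def by (intro orlicz_mono) auto
  also have "\<dots> \<le> 1" using b unfolding S_def by simp
  finally show ?thesis .
qed

lemma lip_cont:
  fixes f :: "real \<Rightarrow> real"
  assumes L: "\<And>v w. \<bar>f v - f w\<bar> \<le> C * \<bar>v - w\<bar> * (exp (lam * v^2) + exp (lam * w^2))"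
  shows "continuous_on UNIV f"
proof (intro continuous_at_imp_continuous_on ballI)
  fix x
  have g: "((\<lambda>y. C * \<bar>y - x\<bar> * (exp (lam * y^2) + exp (lam * x^2))) \<longlongrightarrow> C * \<bar>x - x\<bar> * (exp (lam * x^2) + exp (lam * x^2))) (at x)"
    by (intro tendsto_intros)
  have "((\<lambda>y. f y - f x) \<longlongrightarrow> 0) (at x)"
    by (rule Lim_null_comparison[OF _ g[simplified]]) (use L in auto)
  then show "isCont f x" unfolding isCont_def by (rule LIM_zero_cancel)
qed

theorem proposition2p6:
  fixes f :: "real \<Rightarrow> real" and C lam T :: real
    and u :: "real \<Rightarrow> 'a::euclidean_space \<Rightarrow> real"
  assumes "f 0 = 0"
    and "C > 0" and "lam > 0"
    and "\<And>v w. \<bar>f v - f w\<bar> \<le> C * \<bar>v - w\<bar> * (exp (lam * v^2) + exp (lam * w^2))"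
    and "T > 0"
    and "cont_expL2_0 T u"
  shows "\<forall>p. 2 \<le> p \<longrightarrow> cont_Lp p T (\<lambda>t x. f (u t x))"
proof (intro allI impI)
  fix p :: real assume p: "2 \<le> p"
  note f0 = assms(1) and C = assms(2) and lam = assms(3) and L = assms(4)
  obtain K1 where K1: "K1 > 0" "\<forall>\<epsilon> \<kappa> y::real. \<epsilon> > 0 \<longrightarrow> 0 \<le> \<kappa> \<longrightarrow> \<kappa> * \<epsilon>^2 \<le> 1/2 \<longrightarrow>
     \<bar>y\<bar> powr p * exp (\<kappa> * y^2) \<le> \<epsilon> powr p * K1 * (exp (y^2/\<epsilon>^2) - 1)"
    using core_pw[OF p] by blast
  have p2: "2 \<le> 2*p" using p by simp
  obtain K2 where K2: "K2 > 0" "\<forall>\<epsilon> \<kappa> y::real. \<epsilon> > 0 \<longrightarrow> 0 \<le> \<kappa> \<longrightarrow> \<kappa> * \<epsilon>^2 \<le> 1/2 \<longrightarrow>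
     \<bar>y\<bar> powr (2*p) * exp (\<kappa> * y^2) \<le> \<epsilon> powr (2*p) * K2 * (exp (y^2/\<epsilon>^2) - 1)"
    using core_pw[OF p2] by blast
  have U: "u t \<in> borel_measurable lebesgue \<and> (\<forall>\<alpha>>0. orlicz_exp2_int \<alpha> (u t) < \<infinity>)"
    if "t \<in> {0..T}" for t
    using assms(6) that unfolding cont_expL2_0_def expL2_0_def loc_integrable_def by blast
  have fb: "f \<in> borel_measurable borel"
    by (rule borel_measurable_continuous_onI[OF lip_cont[OF L]])
  define \<epsilon>0 where "\<epsilon>0 = min 1 (1/(8*p*lam))"
  have e0: "\<epsilon>0 > 0" unfolding \<epsilon>0_def using p lam by simp
  have esmall: "(4*p*lam) * \<epsilon>^2 \<le> 1/2" if "0 < \<epsilon>" "\<epsilon> \<le> \<epsilon>0" for \<epsilon>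
  proof -
    have "\<epsilon> \<le> 1" "\<epsilon> \<le> 1/(8*p*lam)" using that unfolding \<epsilon>0_def by auto
    have "\<epsilon>^2 \<le> \<epsilon>" using that \<open>\<epsilon> \<le> 1\<close> by (simp add: power2_eq_square mult_left_le_one_le)
    then have "(4*p*lam) * \<epsilon>^2 \<le> (4*p*lam) * \<epsilon>" using p lam by (intro mult_left_mono) auto
    also have "\<dots> \<le> (4*p*lam) * (1/(8*p*lam))" using p lam \<open>\<epsilon> \<le> 1/(8*p*lam)\<close>
      by (intro mult_left_mono) auto
    also have "\<dots> = 1/2" using p lam by simp
    finally show ?thesis .
  qed
  show "cont_Lp p T (\<lambda>t x. f (u t x))" unfolding cont_Lp_def
  proof (intro conjI ballI)
    fix t assume t: "t \<in> {0..T}"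
    have um: "u t \<in> borel_measurable lebesgue" and ufin: "\<And>\<alpha>. \<alpha> > 0 \<Longrightarrow> orlicz_exp2_int \<alpha> (u t) < \<infinity>"
      using U[OF t] by auto
    show "(\<lambda>x. f (u t x)) \<in> Lp_space p" unfolding Lp_space_def
    proof (intro CollectI conjI)
      show "(\<lambda>x. f (u t x)) \<in> borel_measurable lebesgue" by (rule measurable_compose[OF um fb])
      define R0 where "R0 = enn2real (orlicz_exp2_int \<epsilon>0 (u t))"
      have R0a: "R0 \<ge> 0" by (simp add: R0_def)
      have R0: "orlicz_exp2_int \<epsilon>0 (\<lambda>x. u t x - (\<lambda>x. 0) x) \<le> ennreal R0"
        using ufin[OF e0] unfolding R0_def by (simp add: ennreal_enn2real_if)
      have M: "(\<integral>\<^sup>+x. ennreal (exp ((4*p*lam) * ((\<lambda>x. 0::real) x)^2) - 1) \<partial>lebesgue) \<le> ennreal 0"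
        by simp
      have bm: "(\<lambda>x. 0::real) \<in> borel_measurable lebesgue" by simp
      have "(\<integral>\<^sup>+x. ennreal (\<bar>f (u t x) - f ((\<lambda>x. 0) x)\<bar> powr p) \<partial>lebesgue)
         \<le> ennreal ((2*C) powr p * \<epsilon>0 powr p * (K1 * R0 + K2 * R0 / 2 + 0 / 2))"
        by (rule B_int[OF C lam L p K1(2) K1(1) K2(2) K2(1) um bm e0 esmall[OF e0 order_refl] R0 R0a M order_refl])
      then show "(\<integral>\<^sup>+x. ennreal (\<bar>f (u t x)\<bar> powr p) \<partial>lebesgue) < \<infinity>"
        using f0 by (simp add: le_less_trans)
    qed
  next
    fix t assume t: "t \<in> {0..T}"
    have um: "u t \<in> borel_measurable lebesgue" and ufin: "\<And>\<alpha>. \<alpha> > 0 \<Longrightarrow> orlicz_exp2_int \<alpha> (u t) < \<infinity>"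
      using U[OF t] by auto
    have tends: "((\<lambda>s. expL2_norm (\<lambda>x. u s x - u t x)) \<longlongrightarrow> 0) (at t within {0..T})"
      using assms(6) t unfolding cont_expL2_0_def by blast
    define c where "c = 4*p*lam"
    have cpos: "c > 0" unfolding c_def using p lam by simp
    have Meq: "(\<integral>\<^sup>+x. ennreal (exp ((4*p*lam) * (u t x)^2) - 1) \<partial>lebesgue) = orlicz_exp2_int (1/sqrt c) (u t)"
      unfolding orlicz_exp2_int_def c_def[symmetric]
      using cpos by (intro nn_integral_cong) (simp add: power_divide mult.commute)
    define Mr where "Mr = enn2real (\<integral>\<^sup>+x. ennreal (exp ((4*p*lam) * (u t x)^2) - 1) \<partial>lebesgue)"
    have Mr0: "Mr \<ge> 0" by (simp add: Mr_def)
    have M: "(\<integral>\<^sup>+x. ennreal (exp ((4*p*lam) * (u t x)^2) - 1) \<partial>lebesgue) \<le> ennreal Mr"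
      using ufin[of "1/sqrt c"] cpos unfolding Mr_def Meq by (simp add: ennreal_enn2real_if)
    define D where "D = (2*C) powr p * (K1 * 1 + K2 * 1 / 2 + Mr / 2)"
    have D0: "D \<ge> 0" unfolding D_def using K1 K2 Mr0 by simp
    define Dp where "Dp = D powr (1/p)"
    have Dp0: "Dp \<ge> 0" unfolding Dp_def by simp
    show "((\<lambda>s. Lp_norm p (\<lambda>x. f (u s x) - f (u t x))) \<longlongrightarrow> 0) (at t within {0..T})"
      unfolding tendsto_iff
    proof (intro allI impI)
      fix \<eta> :: real assume eta: "\<eta> > 0"
      define \<epsilon> where "\<epsilon> = min \<epsilon>0 (\<eta> / (2 * (Dp + 1)))"
      have epos: "\<epsilon> > 0" unfolding \<epsilon>_def using e0 eta Dp0 by simp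
      have ele: "\<epsilon> \<le> \<epsilon>0" unfolding \<epsilon>_def by simp
      have eeta: "\<epsilon> * Dp < \<eta>"
      proof -
        have "\<epsilon> * Dp \<le> (\<eta> / (2 * (Dp + 1))) * Dp" unfolding \<epsilon>_def using Dp0
          by (intro mult_right_mono) auto
        also have "\<dots> < \<eta>" using eta Dp0 by (simp add: field_simps add_nonneg_pos)
        finally show ?thesis .
      qed
      have ev1: "eventually (\<lambda>s. expL2_norm (\<lambda>x. u s x - u t x) < \<epsilon>) (at t within {0..T})"
        using order_tendstoD(2)[OF tends epos] .
      have ev2: "eventually (\<lambda>s. s \<in> {0..T}) (at t within {0..T})"
        by (simp add: eventually_at_filter)
      show "eventually (\<lambda>s. dist (Lp_norm p (\<lambda>x. f (u s x) - f (u t x))) 0 < \<eta>) (at t within {0..T})"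
        using ev1 ev2
      proof eventually_elim
        case (elim s)
        have usm: "u s \<in> borel_measurable lebesgue" and usfin: "\<And>\<alpha>. \<alpha> > 0 \<Longrightarrow> orlicz_exp2_int \<alpha> (u s) < \<infinity>"
          using U[OF elim(2)] by auto
        have vm: "(\<lambda>x. u s x - u t x) \<in> borel_measurable lebesgue" using usm um by measurable
        have fin1: "orlicz_exp2_int 1 (\<lambda>x. u s x - u t x) < \<infinity>"
          using orlicz_diff[OF usm um] usfin[of "1/2"] ufin[of "1/2"]
          by (simp add: le_less_trans)
        have small: "orlicz_exp2_int \<epsilon> (\<lambda>x. u s x - u t x) \<le> ennreal 1"
          using orlicz_norm_small[OF vm fin1 elim(1)] by simp
        have I: "(\<integral>\<^sup>+x. ennreal (\<bar>f (u s x) - f (u t x)\<bar> powr p) \<partial>lebesgue)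
           \<le> ennreal ((2*C) powr p * \<epsilon> powr p * (K1 * 1 + K2 * 1 / 2 + Mr / 2))"
          by (rule B_int[OF C lam L p K1(2) K1(1) K2(2) K2(1) usm um epos esmall[OF epos ele] small _ M Mr0]) simp
        have I': "(\<integral>\<^sup>+x. ennreal (\<bar>f (u s x) - f (u t x)\<bar> powr p) \<partial>lebesgue) \<le> ennreal (\<epsilon> powr p * D)"
          using I unfolding D_def by (simp add: mult.assoc mult.left_commute)
        have e2r: "enn2real (\<integral>\<^sup>+x. ennreal (\<bar>f (u s x) - f (u t x)\<bar> powr p) \<partial>lebesgue) \<le> \<epsilon> powr p * D"
          using enn2real_mono[OF I'] D0 by simp
        have "Lp_norm p (\<lambda>x. f (u s x) - f (u t x))
            \<le> (\<epsilon> powr p * D) powr (1/p)"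
          unfolding Lp_norm_def using e2r p by (intro powr_mono2) auto
        also have "\<dots> = \<epsilon> * Dp"
          unfolding Dp_def using epos D0 p by (simp add: powr_mult powr_powr)
        finally have "Lp_norm p (\<lambda>x. f (u s x) - f (u t x)) < \<eta>" using eeta by simp
        moreover have "Lp_norm p (\<lambda>x. f (u s x) - f (u t x)) \<ge> 0" unfolding Lp_norm_def by simp
        ultimately show ?case by simp
      qed
    qed
  qed
qed
end
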